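(* Let $\{X,X_n;\,n\ge1\}$ be i.i.d. random variables with values in a real separable Banach space $\mathbf{B}$ and let $p>0$. Then for any $s>0$, $$\limsup_{n\to\infty}\frac1{\log n}\log\mathbb{P}\Big(\max_{1\le k\le n}\|X_k\|>sn^{1/p}\Big)=\min\Big\{0,\,-\frac{\bar\beta-p}{p}\Big\}$$ and $$\liminf_{n\to\infty}\frac1{\log n}\log\mathbb{P}\Big(\max_{1\le k\le n}\|X_k\|>sn^{1/p}\Big)=\min\Big\{0,\,-\frac{\underline\beta-p}{p}\Big\}.$$
   Context: $\bar\beta=-\limsup_{t\to\infty}\frac1t\log\mathbb{P}(\log\|X\|>t)$, $\underline\beta=-\liminf_{t\to\infty}\frac1t\log\mathbb{P}(\log\|X\|>t)$, both in $[0,\infty]$. Conventions: $\log0=-\infty$; $(\pm\infty+y)/x=\pm\infty$ for $x\in(0,\infty)$, $y\in\mathbb{R}$. *)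

theory Defs
  imports "HOL-Probability.Probability"
begin

definition elog :: "real \<Rightarrow> ereal" where
  "elog x = (if x = 0 then -\<infinity> else ereal (ln x))"

definition beta_bar :: "'a measure \<Rightarrow> ('a \<Rightarrow> 'b::real_normed_vector) \<Rightarrow> ereal" where
  "beta_bar M X = - Limsup at_top
     (\<lambda>t::real. elog (measure M {\<omega> \<in> space M. elog (norm (X \<omega>)) > ereal t}) / ereal t)"

definition beta_under :: "'a measure \<Rightarrow> ('a \<Rightarrow> 'b::real_normed_vector) \<Rightarrow> ereal" where
  "beta_under M X = - Liminf at_top
     (\<lambda>t::real. elog (measure M {\<omega> \<in> space M. elog (norm (X \<omega>)) > ereal t}) / ereal t)"

end

theory Submission
  imports Defs "HOL-Real_Asymp.Real_Asymp"
begin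

lemma elog_pos: "x > 0 \<Longrightarrow> elog x = ereal (ln x)" by (simp add: elog_def)
lemma elog_mono: "0 \<le> x \<Longrightarrow> x \<le> y \<Longrightarrow> elog x \<le> elog y"
  by (auto simp: elog_def)
lemma elog_nonpos: "0 \<le> x \<Longrightarrow> x \<le> 1 \<Longrightarrow> elog x \<le> 0"
  by (auto simp: elog_def)

lemma Limsup_filter_mono:
  fixes f :: "'a \<Rightarrow> 'b::complete_lattice"
  assumes "F \<le> G" shows "Limsup F f \<le> Limsup G f"
  unfolding Limsup_def using assms
  by (intro INF_superset_mono) (auto simp: le_filter_def)

lemma Liminf_filter_anti:
  fixes f :: "'a \<Rightarrow> 'b::complete_lattice"
  assumes "F \<le> G" shows "Liminf G f \<le> Liminf F f"
  unfolding Liminf_def using assms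
  by (intro SUP_subset_mono) (auto simp: le_filter_def)

lemma ratio_eq:
  fixes x :: ereal and a b :: real
  assumes "a > 0" "b > 0"
  shows "x / ereal a = ereal (b / a) * (x / ereal b)"
  using assms by (cases x) (auto simp: field_simps)

lemma div_le1:
  fixes x y :: ereal and a b :: real
  assumes "x \<le> y" "y \<le> 0" "0 < a" "a \<le> b"
  shows "x / ereal a \<le> y / ereal b"
proof (cases x; cases y)
  fix r r' assume *: "x = ereal r" "y = ereal r'"
  have "r / a \<le> r' / a" using assms * by (simp add: divide_right_mono)
  also have "r' / a \<le> r' / b" using assms * by (simp add: divide_left_mono_neg)
  finally show ?thesis using * assms by simp
qed (use assms in auto)




lemma min_ereal_aux: "min 0 (1 + ereal r) = ereal (min 0 (1 + r))"
  by (cases "1 + r \<le> 0") (auto simp: min_def zero_ereal_def one_ereal_def)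

lemma min_add_aux:
  fixes y e r :: real
  shows "min 0 y + e \<le> r \<Longrightarrow> min 0 (ereal y) + ereal e \<le> ereal r"
  by (cases "y \<le> 0") (auto simp: min_def)

lemma divmin_aux:
  fixes L y :: real assumes "L > 0"
  shows "min 0 (L + y) / L = min 0 (1 + y / L)"
proof -
  have "(L + y) / L = 1 + y / L" using assms by (simp add: add_divide_distrib)
  moreover have "min 0 z / L = min 0 (z / L)" for z
    using assms by (cases "z \<le> 0") (auto simp: min_def divide_le_0_iff zero_le_divide_iff)
  ultimately show ?thesis by simp
qed

lemma asym:
  fixes G :: "real \<Rightarrow> real" and a :: "nat \<Rightarrow> real" and p s :: real
  assumes p: "p > 0" and s: "s > 0"
    and Gmono: "\<And>x y. x \<le> y \<Longrightarrow> G y \<le> G x"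
    and G0: "\<And>x. 0 \<le> G x" and G1: "\<And>x. G x \<le> 1"
    and aup: "\<And>n. n \<ge> 1 \<Longrightarrow> a n \<le> min 1 (real n * G (s * real n powr (1/p)))"
    and alow: "\<And>n. n \<ge> 1 \<Longrightarrow> min 1 (real n * G (s * real n powr (1/p))) / 2 \<le> a n"
  shows "limsup (\<lambda>n. elog (a n) / ereal (ln (real n)))
           = min 0 (1 + ereal (1/p) * Limsup at_top (\<lambda>t::real. elog (G (exp t)) / ereal t))
       \<and> liminf (\<lambda>n. elog (a n) / ereal (ln (real n)))
           = min 0 (1 + ereal (1/p) * Liminf at_top (\<lambda>t::real. elog (G (exp t)) / ereal t))"
proof -
  define T where "T n = ln s + ln (real n) / p" for n :: nat
  define \<phi> where "\<phi> x = elog (G (exp x))" for x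
  define f where "f t = \<phi> t / ereal t" for t
  define v where "v n = f (T n)" for n
  define q where "q n = \<phi> (T n) / ereal (ln (real n))" for n
  define m where "m n = min 0 (1 + q n)" for n
  define b where "b n = elog (a n) / ereal (ln (real n))" for n
  have fdef: "(\<lambda>t::real. elog (G (exp t)) / ereal t) = f"
    by (auto simp: f_def \<phi>_def)
  have \<phi>np: "\<phi> x \<le> 0" for x unfolding \<phi>_def using G0 G1 by (rule elog_nonpos)
  have \<phi>mono: "\<phi> y \<le> \<phi> x" if "x \<le> y" for x y
    unfolding \<phi>_def using that by (intro elog_mono G0 Gmono) simp
  have expT: "exp (T n) = s * real n powr (1/p)" if "n \<ge> 1" for n
    using that s by (simp add: T_def exp_add powr_def)
  have Tlim: "filterlim T at_top sequentially"
    unfolding T_def using p by real_asymp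
  have "eventually (\<lambda>n. T n > 0) sequentially"
    using Tlim by (simp add: filterlim_at_top_dense)
  then obtain N0 where N0: "\<And>n. n \<ge> N0 \<Longrightarrow> T n > 0"
    by (auto simp: eventually_sequentially)
  define N where "N = max N0 2"
  have TN: "n \<ge> N \<Longrightarrow> T n > 0" for n using N0 by (simp add: N_def)
  have evN: "eventually (\<lambda>n. n \<ge> N) sequentially" by (rule eventually_ge_at_top)

  have stepA: "b n \<le> m n \<and> m n + ereal (- ln 2 / ln (real n)) \<le> b n" if n: "n \<ge> 2" for n
  proof -
    define g where "g = G (exp (T n))"
    have L: "ln (real n) > 0" using n by simp
    have gdef: "G (s * real n powr (1/p)) = g" using expT[of n] n by (simp add: g_def)
    have au: "a n \<le> min 1 (real n * g)" and al: "min 1 (real n * g) / 2 \<le> a n"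
      using aup[of n] alow[of n] n gdef by auto
    show ?thesis
    proof (cases "g = 0")
      case True
      then have "a n = 0" using au al by simp
      then show ?thesis using True L
        by (simp add: b_def m_def q_def \<phi>_def g_def[symmetric] elog_def)
    next
      case False
      then have g: "g > 0" using G0 g_def by (metis less_eq_real_def)
      have ngpos: "real n * g > 0" using g n by simp
      have apos: "a n > 0" using al ngpos by (smt (verit) divide_pos_pos min_def)
      have eb: "b n = ereal (ln (a n) / ln (real n))"
        using apos L by (simp add: b_def elog_pos)
      have em: "m n = ereal (min 0 (1 + ln g / ln (real n)))"
        using g L by (simp add: m_def q_def \<phi>_def g_def[symmetric] elog_pos zero_ereal_def add.commute)
      have lnmin: "ln (min 1 (real n * g)) = min 0 (ln (real n) + ln g)"
      proof -
        have lm: "ln (min 1 x) = min 0 (ln x)" if "x > 0" for x :: real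
          using that by (cases "x \<le> 1") (auto simp: min_def)
        show ?thesis using lm[OF ngpos] g n by (simp add: ln_mult)
      qed
      have up1: "ln (a n) \<le> min 0 (ln (real n) + ln g)"
        using au apos lnmin by (metis ln_le_cancel_iff ngpos min_less_iff_conj zero_less_one)
      have lo1: "min 0 (ln (real n) + ln g) - ln 2 \<le> ln (a n)"
      proof -
        have "ln (min 1 (real n * g) / 2) \<le> ln (a n)"
          using al apos ngpos by (subst ln_le_cancel_iff) auto
        moreover have "ln (min 1 (real n * g) / 2) = ln (min 1 (real n * g)) - ln 2"
          using ngpos by (subst ln_div) auto
        ultimately show ?thesis using lnmin by simp
      qed
      have "ln (a n) / ln (real n) \<le> min 0 (1 + ln g / ln (real n))"
      proof -
        have "ln (a n) / ln (real n) \<le> min 0 (ln (real n) + ln g) / ln (real n)"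
          using up1 L by (simp add: divide_right_mono)
        then show ?thesis using divmin_aux[OF L] by simp
      qed
      moreover have lo2: "min 0 (1 + ln g / ln (real n)) + (- ln 2 / ln (real n)) \<le> ln (a n) / ln (real n)"
      proof -
        have "(min 0 (ln (real n) + ln g) - ln 2) / ln (real n) \<le> ln (a n) / ln (real n)"
          using lo1 L by (simp add: divide_right_mono)
        then show ?thesis using divmin_aux[OF L] by (simp add: diff_divide_distrib)
      qed
      moreover have "m n + ereal (- ln 2 / ln (real n)) \<le> b n"
        unfolding eb m_def q_def \<phi>_def g_def[symmetric] using g L min_add_aux[OF lo2]
        by (simp add: elog_pos add.commute)
      ultimately show ?thesis using eb em by simp
    qed
  qed

  have Ldef: "(\<lambda>n. elog (a n) / ereal (ln (real n))) = b" by (simp add: b_def fun_eq_iff)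
  have qv: "eventually (\<lambda>n. q n = ereal (T n / ln (real n)) * v n) sequentially"
    using evN
  proof eventually_elim
    case (elim n)
    then show ?case using TN[of n] unfolding q_def v_def f_def
      by (intro ratio_eq) (auto simp: N_def)
  qed
  have "(\<lambda>n. T n / ln (real n)) \<longlonglongrightarrow> inverse p" unfolding T_def using p by real_asymp
  then have r1: "(\<lambda>n. ereal (T n / ln (real n))) \<longlonglongrightarrow> ereal (1/p)"
    by (intro tendsto_ereal) (simp add: inverse_eq_divide)
  have p1: "ereal (1/p) > 0" "ereal (1/p) \<noteq> \<infinity>" using p by auto
  have limsup_q: "limsup q = ereal (1/p) * limsup v"
    using Limsup_eq[OF qv] ereal_limsup_lim_mult[OF r1 p1] by simp
  have liminf_q: "liminf q = ereal (1/p) * liminf v"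
    using Liminf_eq[OF qv] ereal_liminf_lim_mult[OF r1 p1] by simp
  have cmin: "continuous_on UNIV (\<lambda>x::ereal. min 0 x)" by (intro continuous_intros)
  have mmin: "mono (\<lambda>x::ereal. min 0 x)" by (auto simp: mono_def min_le_iff_disj)
  have c1: "(\<lambda>n. (1::ereal)) \<longlonglongrightarrow> 1" "\<bar>(1::ereal)\<bar> \<noteq> \<infinity>" by auto
  have limsup_m: "limsup m = min 0 (1 + limsup q)"
    unfolding m_def using Limsup_compose_continuous_mono[OF cmin mmin, of sequentially "\<lambda>n. 1 + q n"]
      ereal_limsup_lim_add[OF c1, of q] by simp
  have liminf_m: "liminf m = min 0 (1 + liminf q)"
    unfolding m_def using Liminf_compose_continuous_mono[OF cmin mmin, of sequentially "\<lambda>n. 1 + q n"]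
      ereal_liminf_lim_add[OF c1, of q] by simp
  have evA: "eventually (\<lambda>n. b n \<le> m n \<and> m n + ereal (- ln 2 / ln (real n)) \<le> b n) sequentially"
    using eventually_ge_at_top[of 2] by eventually_elim (use stepA in auto)
  have "(\<lambda>n. - ln 2 / ln (real n)) \<longlonglongrightarrow> 0" by real_asymp
  then have e0: "(\<lambda>n. ereal (- ln 2 / ln (real n))) \<longlonglongrightarrow> ereal 0" "\<bar>ereal 0\<bar> \<noteq> \<infinity>"
    by (auto intro: tendsto_ereal)
  have limsup_b: "limsup b = limsup m"
  proof (rule antisym)
    show "limsup b \<le> limsup m" by (rule Limsup_mono) (use evA in \<open>auto elim: eventually_mono\<close>)
    have "limsup (\<lambda>n. ereal (- ln 2 / ln (real n)) + m n) \<le> limsup b"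
      by (rule Limsup_mono) (use evA in \<open>auto elim: eventually_mono simp: add.commute\<close>)
    then show "limsup m \<le> limsup b" using ereal_limsup_lim_add[OF e0, of m] by simp
  qed
  have liminf_b: "liminf b = liminf m"
  proof (rule antisym)
    show "liminf b \<le> liminf m" by (rule Liminf_mono) (use evA in \<open>auto elim: eventually_mono\<close>)
    have "liminf (\<lambda>n. ereal (- ln 2 / ln (real n)) + m n) \<le> liminf b"
      by (rule Liminf_mono) (use evA in \<open>auto elim: eventually_mono simp: add.commute\<close>)
    then show "liminf m \<le> liminf b" using ereal_liminf_lim_add[OF e0, of m] by simp
  qed
  define \<nu> where "\<nu> t = nat \<lfloor>exp (p * (t - ln s))\<rfloor>" for t
  have \<nu>lim: "filterlim \<nu> sequentially at_top"
    unfolding \<nu>_def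
    by (intro filterlim_compose[OF filterlim_nat_sequentially]
          filterlim_compose[OF filterlim_floor_sequentially]) (use p in real_asymp)
  have \<nu>b: "T (\<nu> t) \<le> t \<and> t \<le> T (Suc (\<nu> t))" if "\<nu> t \<ge> 1" for t
  proof -
    define e where "e = exp (p * (t - ln s))"
    have e: "e > 0" by (simp add: e_def)
    have rn: "real (\<nu> t) = of_int \<lfloor>e\<rfloor>" using e by (simp add: \<nu>_def e_def[symmetric])
    have n1: "real (\<nu> t) \<le> e" "e < real (\<nu> t) + 1" using rn by linarith+
    have npos: "real (\<nu> t) > 0" using that by simp
    have "ln (real (\<nu> t)) \<le> ln e" using n1 npos by simp
    then have a1: "ln (real (\<nu> t)) \<le> p * (t - ln s)" by (simp add: e_def)
    have "ln e < ln (real (\<nu> t) + 1)" using n1 e by simp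
    then have a2: "p * (t - ln s) < ln (real (Suc (\<nu> t)))" by (simp add: e_def add.commute)
    show ?thesis using a1 a2 p unfolding T_def by (auto simp: field_simps)
  qed
  have ev\<nu>: "eventually (\<lambda>t. \<nu> t \<ge> N) at_top"
    using \<nu>lim by (simp add: filterlim_at_top)
  define w where "w n = \<phi> (T n) / ereal (T (Suc n))" for n
  define w' where "w' n = \<phi> (T n) / ereal (T (n - 1))" for n
  have fw: "eventually (\<lambda>t. f t \<le> w (\<nu> t) \<and> w' (Suc (\<nu> t)) \<le> f t) at_top"
    using ev\<nu>
  proof eventually_elim
    case (elim t)
    have n1: "\<nu> t \<ge> 1" using elim by (simp add: N_def)
    have Tp: "T (\<nu> t) > 0" using TN elim by simp
    note bb = \<nu>b[OF n1]
    have "f t \<le> w (\<nu> t)" unfolding f_def w_def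
    proof (rule div_le1)
      show "\<phi> t \<le> \<phi> (T (\<nu> t))" using bb by (intro \<phi>mono) simp
      show "\<phi> (T (\<nu> t)) \<le> 0" by (rule \<phi>np)
      show "0 < t" using bb Tp by linarith
      show "t \<le> T (Suc (\<nu> t))" using bb by simp
    qed
    moreover have "w' (Suc (\<nu> t)) \<le> f t" unfolding f_def w'_def diff_Suc_1
    proof (rule div_le1)
      show "\<phi> (T (Suc (\<nu> t))) \<le> \<phi> t" using bb by (intro \<phi>mono) simp
      show "\<phi> t \<le> 0" by (rule \<phi>np)
      show "0 < T (\<nu> t)" by (rule Tp)
      show "T (\<nu> t) \<le> t" using bb by simp
    qed
    ultimately show ?case by simp
  qed
  have "(\<lambda>n. T n / T (Suc n)) \<longlonglongrightarrow> 1" unfolding T_def using p by real_asymp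
  then have r2: "(\<lambda>n. ereal (T n / T (Suc n))) \<longlonglongrightarrow> ereal 1" by (rule tendsto_ereal)
  have "(\<lambda>n. T (Suc n) / T n) \<longlonglongrightarrow> 1" unfolding T_def using p by real_asymp
  then have "(\<lambda>n. T (Suc n) / T (Suc n - 1)) \<longlonglongrightarrow> 1" by (simp only: diff_Suc_1)
  then have "(\<lambda>n. T n / T (n - 1)) \<longlonglongrightarrow> 1"
    by (rule LIMSEQ_imp_Suc)
  then have r3: "(\<lambda>n. ereal (T n / T (n - 1))) \<longlonglongrightarrow> ereal 1" by (rule tendsto_ereal)
  have one: "ereal 1 > 0" "ereal 1 \<noteq> \<infinity>" by auto
  have wv: "eventually (\<lambda>n. w n = ereal (T n / T (Suc n)) * v n) sequentially"
    using evN
  proof eventually_elim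
    case (elim n)
    then show ?case using TN[of n] TN[of "Suc n"] unfolding w_def v_def f_def
      by (intro ratio_eq) auto
  qed
  have wv': "eventually (\<lambda>n. w' n = ereal (T n / T (n - 1)) * v n) sequentially"
    using eventually_ge_at_top[of "Suc N"]
  proof eventually_elim
    case (elim n)
    then show ?case using TN[of n] TN[of "n - 1"] unfolding w'_def v_def f_def
      by (intro ratio_eq) auto
  qed
  have limsup_w: "limsup w = limsup v"
    using Limsup_eq[OF wv] ereal_limsup_lim_mult[OF r2 one] by simp
  have liminf_w': "liminf w' = liminf v"
    using Liminf_eq[OF wv'] ereal_liminf_lim_mult[OF r3 one] by simp
  have Tfilt: "filtermap T sequentially \<le> at_top" using Tlim by (simp add: filterlim_def)
  have \<nu>filt: "filtermap \<nu> at_top \<le> sequentially" using \<nu>lim by (simp add: filterlim_def)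
  have \<nu>filt': "filtermap (\<lambda>t. Suc (\<nu> t)) at_top \<le> sequentially"
    using filterlim_compose[OF filterlim_Suc \<nu>lim] by (simp add: filterlim_def)
  have LS: "Limsup at_top f = limsup v"
  proof (rule antisym)
    have "Limsup at_top f \<le> Limsup at_top (\<lambda>t. w (\<nu> t))"
      by (rule Limsup_mono) (use fw in \<open>auto elim: eventually_mono\<close>)
    also have "\<dots> \<le> Limsup (filtermap \<nu> at_top) w" by (rule Limsup_filtermap_ge)
    also have "\<dots> \<le> limsup w" by (rule Limsup_filter_mono[OF \<nu>filt])
    finally show "Limsup at_top f \<le> limsup v" using limsup_w by simp
    have "limsup v \<le> Limsup (filtermap T sequentially) f"
      unfolding v_def by (rule Limsup_filtermap_ge)
    also have "\<dots> \<le> Limsup at_top f" by (rule Limsup_filter_mono[OF Tfilt])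
    finally show "limsup v \<le> Limsup at_top f" .
  qed
  have LI: "Liminf at_top f = liminf v"
  proof (rule antisym)
    have "liminf w' \<le> Liminf (filtermap (\<lambda>t. Suc (\<nu> t)) at_top) w'"
      by (rule Liminf_filter_anti[OF \<nu>filt'])
    also have "\<dots> \<le> Liminf at_top (\<lambda>t. w' (Suc (\<nu> t)))" by (rule Liminf_filtermap_le)
    also have "\<dots> \<le> Liminf at_top f"
      by (rule Liminf_mono) (use fw in \<open>auto elim: eventually_mono\<close>)
    finally show "liminf v \<le> Liminf at_top f" using liminf_w' by simp
    have "Liminf at_top f \<le> Liminf (filtermap T sequentially) f" by (rule Liminf_filter_anti[OF Tfilt])
    also have "\<dots> \<le> liminf v"
      unfolding v_def by (rule Liminf_filtermap_le)
    finally show "Liminf at_top f \<le> liminf v" .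
  qed
  show ?thesis unfolding Ldef fdef
    using limsup_b limsup_m limsup_q LS liminf_b liminf_m liminf_q LI by simp
qed


lemma ereal_id:
  fixes A :: ereal and p :: real assumes "p > 0"
  shows "- (- A - ereal p) / ereal p = 1 + ereal (1/p) * A"
  using assms by (cases A) (auto simp: field_simps)

lemma elog_gt:
  fixes x t :: real assumes "0 \<le> x"
  shows "(ereal t < elog x) = (exp t < x)"
proof (cases "x = 0")
  case True then show ?thesis by (simp add: elog_def)
next
  case False
  then have "x > 0" using assms by simp
  then show ?thesis by (simp add: elog_def) (metis exp_less_cancel_iff exp_ln)
qed

lemma alg:
  fixes g :: real assumes "0 \<le> g" "g \<le> 1"
  shows "min 1 (real n * g) / 2 \<le> 1 - (1 - g) ^ n"
proof -
  have b: "1 + real n * g \<le> (1 + g) ^ n" using Bernoulli_inequality[of g n] assms by simp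
  have "(1 - g) ^ n * (1 + g) ^ n = (1 - g^2) ^ n"
    by (simp add: power_mult_distrib[symmetric] algebra_simps power2_eq_square)
  also have "\<dots> \<le> 1" using assms by (intro power_le_one) (auto simp: power2_eq_square mult_le_one)
  finally have c: "(1 - g) ^ n * (1 + g) ^ n \<le> 1" .
  have nn: "(1 - g) ^ n \<ge> 0" using assms by simp
  have d: "(1 - g) ^ n * (1 + real n * g) \<le> 1"
    using mult_left_mono[OF b nn] c by linarith
  have pos: "1 + real n * g > 0" using assms by (simp add: add_pos_nonneg)
  have e: "(1 - g) ^ n \<le> 1 / (1 + real n * g)" using d pos by (simp add: field_simps)
  have f: "min 1 x / 2 \<le> 1 - 1 / (1 + x)" if "x \<ge> 0" for x :: real
  proof (cases "x \<le> 1")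
    case True
    then have "x * x \<le> x" using that by (simp add: mult_right_le_one_le)
    then show ?thesis using True that by (auto simp: field_simps)
  next
    case False
    then show ?thesis using that by (auto simp: field_simps)
  qed
  show ?thesis using f[of "real n * g"] e assms by simp
qed

theorem lemma3p4:
  fixes M :: "'a measure"
    and Y :: "'a \<Rightarrow> 'b::{banach, second_countable_topology}"
    and X :: "nat \<Rightarrow> 'a \<Rightarrow> 'b"
    and p s :: real
  assumes "prob_space M"
    and "Y \<in> borel_measurable M"
    and "\<And>n. n \<ge> 1 \<Longrightarrow> X n \<in> borel_measurable M"
    and "prob_space.indep_vars M (\<lambda>_. borel) X {1..}"
    and "\<And>n. n \<ge> 1 \<Longrightarrow> distr M borel (X n) = distr M borel Y"
    and "p > 0" and "s > 0"
  shows "(limsup (\<lambda>n. elog (measure M {\<omega> \<in> space M.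
              (MAX k\<in>{1..n}. norm (X k \<omega>)) > s * real n powr (1 / p)}) / ereal (ln (real n)))
           = min 0 (- (beta_bar M Y - ereal p) / ereal p))
     \<and> (liminf (\<lambda>n. elog (measure M {\<omega> \<in> space M.
              (MAX k\<in>{1..n}. norm (X k \<omega>)) > s * real n powr (1 / p)}) / ereal (ln (real n)))
           = min 0 (- (beta_under M Y - ereal p) / ereal p))"
proof -
  interpret P: prob_space M by (rule assms(1))
  note Ym[measurable] = assms(2)
  define G where "G c = measure M {\<omega> \<in> space M. norm (Y \<omega>) > c}" for c
  define a where "a n = measure M {\<omega> \<in> space M.
              (MAX k\<in>{1..n}. norm (X k \<omega>)) > s * real n powr (1 / p)}" for n
  have Gmono: "G y \<le> G x" if "x \<le> y" for x y
    unfolding G_def using that by (intro P.finite_measure_mono) auto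
  have G0: "0 \<le> G x" for x by (simp add: G_def)
  have G1: "G x \<le> 1" for x by (simp add: G_def)
  have PE: "measure M {\<omega> \<in> space M. norm (X k \<omega>) > c} = G c" if k: "k \<ge> 1" for k c
  proof -
    have Xm[measurable]: "X k \<in> borel_measurable M" using assms(3) k .
    have S: "{x::'b. c < norm x} \<in> sets borel" by measurable
    have "measure (distr M borel (X k)) {x. c < norm x} = measure (distr M borel Y) {x. c < norm x}"
      using assms(5)[OF k] by simp
    then have "measure M (X k -` {x. c < norm x} \<inter> space M) = measure M (Y -` {x. c < norm x} \<inter> space M)"
      using S by (simp add: measure_distr)
    then show ?thesis unfolding G_def by (simp add: Int_def conj_commute vimage_def)
  qed
  have bounds: "a n \<le> min 1 (real n * G c) \<and> min 1 (real n * G c) / 2 \<le> a n"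
    if n: "n \<ge> 1" and c: "c = s * real n powr (1/p)" for n c
  proof -
    define E where "E k = {\<omega> \<in> space M. norm (X k \<omega>) > c}" for k
    define F where "F k = {\<omega> \<in> space M. norm (X k \<omega>) \<le> c}" for k
    have Xm[measurable]: "X k \<in> borel_measurable M" if "k \<in> {1..n}" for k
      using assms(3) that by simp
    have Ev: "E k \<in> sets M" "F k \<in> sets M" if "k \<in> {1..n}" for k
      unfolding E_def F_def using that by measurable
    have U: "{\<omega> \<in> space M. (MAX k\<in>{1..n}. norm (X k \<omega>)) > c} = (\<Union>k\<in>{1..n}. E k)"
      using n by (auto simp: E_def Max_gr_iff)
    have an: "a n = measure M (\<Union>k\<in>{1..n}. E k)" unfolding a_def c[symmetric] U ..
    have PEk: "measure M (E k) = G c" if "k \<in> {1..n}" for k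
      using PE[of k c] that by (simp add: E_def)
    have "a n \<le> (\<Sum>k\<in>{1..n}. measure M (E k))"
      unfolding an by (rule P.finite_measure_subadditive_finite) (use Ev in auto)
    also have "\<dots> = real n * G c" using PEk by simp
    finally have up1: "a n \<le> real n * G c" .
    have up2: "a n \<le> 1" by (simp add: a_def)
    have ind: "P.indep_events F {1..}"
      unfolding F_def
      by (rule P.indep_eventsI_indep_vars[OF assms(4), where P="\<lambda>i x. norm x \<le> c"]) measurable
    have "measure M (\<Inter>k\<in>{1..n}. F k) = (\<Prod>k\<in>{1..n}. measure M (F k))"
      using ind n unfolding P.indep_events_def by (auto intro!: bspec)
    also have "\<dots> = (\<Prod>k\<in>{1..n}. 1 - G c)"
    proof (rule prod.cong)
      fix k assume k: "k \<in> {1..n}"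
      have "F k = space M - E k" unfolding E_def F_def by auto
      then show "measure M (F k) = 1 - G c" using P.prob_compl[OF Ev(1)[OF k]] PEk[OF k] by simp
    qed simp
    also have "\<dots> = (1 - G c) ^ n" by simp
    finally have pi: "measure M (\<Inter>k\<in>{1..n}. F k) = (1 - G c) ^ n" .
    have "space M - (\<Union>k\<in>{1..n}. E k) = (\<Inter>k\<in>{1..n}. F k)"
      using n unfolding E_def F_def by auto (metis atLeastAtMost_iff not_le)
    moreover have "(\<Union>k\<in>{1..n}. E k) \<in> sets M" using Ev by auto
    ultimately have "a n = 1 - (1 - G c) ^ n"
      using P.prob_compl[of "\<Union>k\<in>{1..n}. E k"] pi an by simp
    then have lo: "min 1 (real n * G c) / 2 \<le> a n" using alg[OF G0 G1] by simp
    show ?thesis using up1 up2 lo by simp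
  qed
  have aup: "a n \<le> min 1 (real n * G (s * real n powr (1/p)))" if "n \<ge> 1" for n
    using bounds[OF that refl] by simp
  have alow: "min 1 (real n * G (s * real n powr (1/p))) / 2 \<le> a n" if "n \<ge> 1" for n
    using bounds[OF that refl] by simp
  note main = asym[OF assms(6,7) Gmono G0 G1 aup alow]
  have fe: "(\<lambda>t::real. elog (measure M {\<omega> \<in> space M. elog (norm (Y \<omega>)) > ereal t}) / ereal t)
      = (\<lambda>t. elog (G (exp t)) / ereal t)"
    unfolding G_def by (simp add: elog_gt)
  have bb: "beta_bar M Y = - Limsup at_top (\<lambda>t::real. elog (G (exp t)) / ereal t)"
    unfolding beta_bar_def fe ..
  have bu: "beta_under M Y = - Liminf at_top (\<lambda>t::real. elog (G (exp t)) / ereal t)"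
    unfolding beta_under_def fe ..
  show ?thesis
    unfolding a_def[symmetric] bb bu using main ereal_id[OF assms(6)] by simp
qed

end
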